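(* Let $S=\{\rho_1=0<\rho_2<\cdots\}\neq\mathbb{N}_0$ be an Arf numerical semigroup with conductor $c=\rho_r$. If $j$ is an integer with $\rho_{r-1}+r\le j<c+r$, then $\beta(\rho_j)=r-1$.
   Context: A numerical semigroup is a submonoid $S$ of $(\mathbb{N}_0,+)$ with finite complement, with elements listed increasingly. $S$ is Arf if $\rho_i+\rho_j-\rho_k\in S$ for all positive integers $i\ge j\ge k$. The conductor $c$ is the smallest integer such that all integers $\ge c$ lie in $S$, with $c=\rho_r$ (so $r\ge2$ when $S\neq\mathbb{N}_0$). For $\rho\in S$: $A[\rho]=\{p\in S:\ \rho-p\in S\}$ and $\beta(\rho)=\max\{j\ge1:\ \rho_1,\dots,\rho_j\in A[\rho]\ \text{and}\ 2\rho_j\le\rho\}$. *)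

theory Defs
  imports Main "HOL-Library.Infinite_Set"
begin

definition numerical_semigroup :: "nat set \<Rightarrow> bool" where
  "numerical_semigroup S \<longleftrightarrow> 0 \<in> S \<and> (\<forall>a\<in>S. \<forall>b\<in>S. a + b \<in> S) \<and> finite (UNIV - S)"

text \<open>The elements of S listed increasingly, 1-indexed: rho S 1 = 0 < rho S 2 < ...\<close>
definition rho :: "nat set \<Rightarrow> nat \<Rightarrow> nat" where
  "rho S i = enumerate S (i - 1)"

definition Arf :: "nat set \<Rightarrow> bool" where
  "Arf S \<longleftrightarrow> (\<forall>i j k. 1 \<le> k \<and> k \<le> j \<and> j \<le> i \<longrightarrow> rho S i + rho S j - rho S k \<in> S)"

definition conductor :: "nat set \<Rightarrow> nat" where
  "conductor S = (LEAST c. \<forall>n\<ge>c. n \<in> S)"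

text \<open>A[rho] = {p in S. rho - p in S} (with rho - p taken in the integers, so p \<le> rho).\<close>
definition Aset :: "nat set \<Rightarrow> nat \<Rightarrow> nat set" where
  "Aset S r = {p \<in> S. p \<le> r \<and> r - p \<in> S}"

definition beta :: "nat set \<Rightarrow> nat \<Rightarrow> nat" where
  "beta S r = Max {j. 1 \<le> j \<and> (\<forall>i\<in>{1..j}. rho S i \<in> Aset S r) \<and> 2 * rho S j \<le> r}"

end

theory Submission
  imports Defs
begin

lemma enum_after:
  fixes S :: "nat set"
  assumes inf: "infinite S" and c: "\<forall>n\<ge>c. n \<in> S" and e: "enumerate S m \<ge> c"
  shows "enumerate S (m + k) = enumerate S m + k"
proof (induction k)
  case 0 then show ?case by simp
next
  case (Suc k)
  have "enumerate S (Suc (m + k)) = (LEAST s. s \<in> S \<and> enumerate S (m+k) < s)"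
    using enumerate_Suc''[OF inf] by blast
  also have "\<dots> = enumerate S (m+k) + 1"
    by (rule Least_equality) (use c e Suc in auto)
  finally show ?case using Suc by simp
qed

theorem mainTheorem9:
  fixes S :: "nat set" and r j :: nat
  assumes "numerical_semigroup S"
    and "S \<noteq> UNIV"
    and "Arf S"
    and "1 \<le> r"
    and "rho S r = conductor S"
    and "rho S (r - 1) + r \<le> j"
    and "j < conductor S + r"
  shows "beta S (rho S j) = r - 1"
proof -
  have S0: "0 \<in> S" and fin: "finite (UNIV - S)" using assms(1) unfolding numerical_semigroup_def by auto
  have inf: "infinite S"
  proof
    assume "finite S"
    then have "finite (S \<union> (UNIV - S))" using fin by simp
    then show False by simp
  qed
  obtain m where m: "\<forall>n\<ge>m. n \<in> S"
  proof -
    obtain b where "\<forall>x\<in>UNIV - S. x \<le> b" using fin finite_nat_set_iff_bounded_le by blast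
    then have "\<forall>n\<ge>Suc b. n \<in> S" by force
    then show ?thesis using that by blast
  qed
  define c where "c = conductor S"
  have call: "\<forall>n\<ge>c. n \<in> S" unfolding c_def conductor_def by (rule LeastI[of _ m]) (use m in blast)
  have rho1: "rho S 1 = 0" unfolding rho_def using S0 by (simp add: enumerate_0 Least_eq_0)
  have r2: "r \<ge> 2"
  proof (rule ccontr)
    assume "\<not> r \<ge> 2"
    then have "r = 1" using assms(4) by simp
    then have "c = 0" using assms(5) rho1 c_def by simp
    then show False using call assms(2) by auto
  qed
  have mono: "rho S a < rho S b" if "1 \<le> a" "a < b" for a b
    unfolding rho_def using enumerate_mono[OF _ inf] that by simp
  have monole: "rho S a \<le> rho S b" if "1 \<le> a" "a \<le> b" for a b
    using mono[of a b] that by (cases "a = b") auto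
  have inS: "rho S a \<in> S" for a unfolding rho_def using enumerate_in_set[OF inf] .
  have after: "rho S (r + k) = c + k" for k
  proof -
    have "enumerate S ((r - 1) + k) = enumerate S (r - 1) + k"
      by (rule enum_after[OF inf call]) (use assms(5) c_def in \<open>simp add: rho_def\<close>)
    moreover have "r + k - 1 = (r - 1) + k" using r2 by simp
    ultimately show ?thesis using assms(5) c_def by (simp add: rho_def)
  qed
  have jr: "j \<ge> r" using assms(6) by simp
  have rj: "rho S j = c + (j - r)" using after[of "j - r"] jr by simp
  have lo: "rho S j \<ge> c + rho S (r - 1)" using rj assms(6) by simp
  have hi: "rho S j < 2 * c" using rj assms(7) jr c_def by simp
  have rlt: "rho S (r - 1) < c" using mono[of "r - 1" r] r2 assms(5) c_def by simp
  define B where "B = {k. 1 \<le> k \<and> (\<forall>i\<in>{1..k}. rho S i \<in> Aset S (rho S j)) \<and> 2 * rho S k \<le> rho S j}"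
  have inB: "r - 1 \<in> B"
  proof -
    have "rho S i \<in> Aset S (rho S j)" if "i \<in> {1..r-1}" for i
    proof -
      have le: "rho S i \<le> rho S (r - 1)" using monole[of i "r - 1"] that by simp
      then have "rho S j - rho S i \<ge> c" using lo by simp
      then show ?thesis unfolding Aset_def using inS[of i] call le lo by auto
    qed
    moreover have "2 * rho S (r - 1) \<le> rho S j" using lo rlt by simp
    ultimately show ?thesis unfolding B_def using r2 by auto
  qed
  have bnd: "k \<le> r - 1" if "k \<in> B" for k
  proof (rule ccontr)
    assume "\<not> k \<le> r - 1"
    then have "k \<ge> r" by simp
    then have "rho S k \<ge> c" using monole[of r k] assms(4,5) c_def by simp
    then show False using that hi unfolding B_def by simp
  qed
  have "Max B = r - 1"
    by (rule Max_eqI) (use bnd inB finite_nat_set_iff_bounded_le in auto)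
  then show ?thesis unfolding beta_def B_def by simp
qed

end
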